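(* Let $\mathcal K=\{\mathbf x\in\mathbb R^n : \mathbf k_i^T\mathbf x\ge 0,\ i=1,\dots,p\}$ be a polyhedral cone with non-empty topological interior, where each $\mathbf k_i$ has unit Euclidean length. Define linear programs as follows. Problem $P_0$: maximize $z$ over $(\mathbf x,z)\in\mathbb R^n\times\mathbb R$ subject to $\mathbf k_i^T\mathbf x\ge z$ for all $i$ and $-1\le x_i\le 1$ for all $i=1,\dots,n$. Given Problem $P_\ell$, let $(\mathbf x_\ell,z_\ell)$ be an (arbitrarily chosen) optimal solution of $P_\ell$, let $\mathbf u_\ell=\mathbf x_\ell/\|\mathbf x_\ell\|$, and let Problem $P_{\ell+1}$ be Problem $P_\ell$ with the additional constraint $\mathbf u_\ell^T\mathbf x\le 1$. Then for any $\ell\ge 0$ and any $r$ with $0\le r<\|\mathbf x_\ell-\mathbf u_\ell\|$, the ball $B_r(\mathbf x_\ell)$ is disjoint from the feasible set of Problem $P_{\ell+1}$, i.e. there is no feasible point $(\mathbf x,z)$ of $P_{\ell+1}$ with $\mathbf x\in B_r(\mathbf x_\ell)$.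
   Context: $B_r(\mathbf x)=\{\mathbf y\in\mathbb R^n:\|\mathbf x-\mathbf y\|\le r\}$ denotes the closed ball, with $\|\cdot\|$ the Euclidean norm. (For each $\ell$, problem $P_\ell$ has an optimal solution and $\|\mathbf x_\ell\|\ge 1$, so $\mathbf u_\ell$ is well defined.) *)

theory Defs
  imports "HOL-Analysis.Analysis"
begin

definition polycone :: "nat \<Rightarrow> (nat \<Rightarrow> real^'n::finite) \<Rightarrow> (real^'n::finite) set" where
  "polycone p k = {x. \<forall>i<p. k i \<bullet> x \<ge> 0}"

definition feasLP :: "nat \<Rightarrow> (nat \<Rightarrow> real^'n::finite) \<Rightarrow> (nat \<Rightarrow> real^'n::finite) \<Rightarrow> nat \<Rightarrow> ((real^'n::finite) \<times> real) set" where
  "feasLP p k u l = {(x, z). (\<forall>i<p. k i \<bullet> x \<ge> z) \<and> (\<forall>j. -1 \<le> x $ j \<and> x $ j \<le> 1)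
                          \<and> (\<forall>j<l. u j \<bullet> x \<le> 1)}"

definition optLP :: "nat \<Rightarrow> (nat \<Rightarrow> real^'n::finite) \<Rightarrow> (nat \<Rightarrow> real^'n::finite) \<Rightarrow> nat \<Rightarrow> real^'n::finite \<Rightarrow> real \<Rightarrow> bool" where
  "optLP p k u l x z \<longleftrightarrow> (x, z) \<in> feasLP p k u l \<and> (\<forall>(x', z') \<in> feasLP p k u l. z' \<le> z)"

end

theory Submission
  imports Defs
begin

theorem lemma1:
  fixes p :: nat and k :: "nat \<Rightarrow> real^'n"
    and xs :: "nat \<Rightarrow> real^'n" and zs :: "nat \<Rightarrow> real"
  assumes unit: "\<And>i. i < p \<Longrightarrow> norm (k i) = 1"
    and int: "interior (polycone p k) \<noteq> {}"
    and opt: "\<And>l. optLP p k (\<lambda>j. xs j /\<^sub>R norm (xs j)) l (xs l) (zs l)"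
    and nrm: "\<And>l. norm (xs l) \<ge> 1"
  shows "\<forall>l r. 0 \<le> r \<and> r < norm (xs l - xs l /\<^sub>R norm (xs l)) \<longrightarrow>
           \<not> (\<exists>x z. (x, z) \<in> feasLP p k (\<lambda>j. xs j /\<^sub>R norm (xs j)) (Suc l) \<and> x \<in> cball (xs l) r)"
proof (intro allI impI notI)
  fix l r
  assume r: "0 \<le> r \<and> r < norm (xs l - xs l /\<^sub>R norm (xs l))"
  assume "\<exists>x z. (x, z) \<in> feasLP p k (\<lambda>j. xs j /\<^sub>R norm (xs j)) (Suc l) \<and> x \<in> cball (xs l) r"
  then obtain x z where f: "(x, z) \<in> feasLP p k (\<lambda>j. xs j /\<^sub>R norm (xs j)) (Suc l)"
    and b: "x \<in> cball (xs l) r" by blast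
  define N where "N = norm (xs l)"
  have N1: "N \<ge> 1" using nrm N_def by simp
  have cut: "(xs l /\<^sub>R N) \<bullet> x \<le> 1" using f unfolding feasLP_def N_def by auto
  have e: "xs l - xs l /\<^sub>R N = (1 - 1/N) *\<^sub>R xs l" by (simp add: algebra_simps divide_inverse)
  have "norm (xs l - xs l /\<^sub>R N) = (1 - 1/N) * N"
  proof -
    have "1/N \<le> 1" using N1 by simp
    hence "\<bar>1 - 1/N\<bar> = 1 - 1/N" by simp
    thus ?thesis unfolding e by (simp add: N_def)
  qed
  also have "\<dots> = N - 1" using N1 by (simp add: field_simps)
  finally have rN: "r < N - 1" using r N_def by simp
  have d: "norm (x - xs l) \<le> r" using b by (simp add: dist_norm norm_minus_commute)
  have cs: "\<bar>xs l \<bullet> (x - xs l)\<bar> \<le> N * norm (x - xs l)"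
    using Cauchy_Schwarz_ineq2[of "xs l" "x - xs l"] N_def by simp
  have "N * norm (x - xs l) \<le> N * r" using d N1 by (intro mult_left_mono) auto
  hence g: "xs l \<bullet> (x - xs l) \<ge> - (N * r)" using cs by linarith
  have sq: "xs l \<bullet> xs l = N * N" by (simp add: N_def dot_square_norm power2_eq_square)
  have sp: "xs l \<bullet> x = xs l \<bullet> xs l + xs l \<bullet> (x - xs l)" by (simp add: inner_diff_right)
  have ge: "xs l \<bullet> x \<ge> N * (N - r)" using g sq sp by (simp add: right_diff_distrib)
  have qe: "(xs l /\<^sub>R N) \<bullet> x = (xs l \<bullet> x) / N" by (simp add: divide_inverse mult.commute)
  have "N - r \<le> (xs l \<bullet> x) / N" using ge N1 by (simp add: pos_le_divide_eq mult.commute)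
  hence "(xs l /\<^sub>R N) \<bullet> x \<ge> N - r" using qe by simp
  with cut rN show False by simp
qed

end
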